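(* Let $\mathcal{S}\subseteq M^*$ be a fixed domain sequence set and let $L\le2|M|^c$ and $l\ge150c\ln|M|/\ln\ln|M|$ be fixed integers. Let $b$ be a constant and let $k\ge 8(b+1)\frac{\ln|\mathcal{S}|+(c+1)\ln|M|}{\ln l}$. Then a set of $k$ independent uniformly random hash functions $h_1,\dots,h_k:M^*\times I\to\{0,\dots,L-1\}$ is $(L,l)$-good for $\mathcal{S}$ with probability at least $1-2|M|^{-b}$.
   Context: Machines $M$ with standing assumption $|M|\ge32$; $c\ge1$ a constant; $I:=\{1,\dots,|M|^c\}$. A job $j$ has a sequence $\mathrm{seq}(j)\in M^*$ and an identifier $\mathrm{ind}(j)\in I$, identifiers being distinct within a job set. A job set $J$ is $\mathcal{S}$-supported if $\mathrm{seq}(j)\in\mathcal{S}$ for all $j\in J$. $C(J)=\max_m\sum_{j\in J}|\{i:\mathrm{seq}(j)_i=m\}|$, $D(J)=\max_j\mathrm{len}(\mathrm{seq}(j))$. For $h$, $h(j):=h(\mathrm{seq}(j),\mathrm{ind}(j))$ and $\mathrm{virt}(j,i)=h(j)+i$ ($i<\mathrm{len}(\mathrm{seq}(j))$). A bad pattern (for $M,L,l,J$) is a collection of sets $B_{T,m}$, $0\le T<2L$, $m\in M$, of pairs $(j,i)$ with $j\in J$ and $\mathrm{seq}(j)_i=m$, each $j$ appearing at most once overall, $|B_{T,m}|\in\{0\}\cup(l,|J|]$, and $\sum|B_{T,m}|>|J|/2$; it occurs for $h$ if $\mathrm{virt}(j,i)=T$ for all $(j,i)\in B_{T,m}$. $h$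 is $(L,l)$-good for $J$ if no bad pattern occurs for $h$. A set $h_1,\dots,h_k$ is $(L,l)$-good for $\mathcal{S}$ if for every $\mathcal{S}$-supported job set $J$ with $L\ge C(J)+D(J)$, at least one $h_i$ is $(L,l)$-good for $J$. *)

theory Defs
  imports "HOL-Probability.Probability_Mass_Function" "HOL-Library.FuncSet"
begin

text \<open>A job is a pair (seq j, ind j) of a machine sequence and an identifier.\<close>
type_synonym 'm job = "'m list \<times> nat"

definition ids :: "'m set \<Rightarrow> real \<Rightarrow> nat set" where
  "ids M c = {1..nat \<lfloor>real (card M) powr c\<rfloor>}"

definition job_set :: "'m set \<Rightarrow> real \<Rightarrow> 'm job set \<Rightarrow> bool" where
  "job_set M c J \<longleftrightarrow> finite J \<and> (\<forall>j\<in>J. fst j \<in> lists M \<and> snd j \<in> ids M c) \<and> inj_on snd J"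

definition supported :: "'m list set \<Rightarrow> 'm job set \<Rightarrow> bool" where
  "supported S J \<longleftrightarrow> (\<forall>j\<in>J. fst j \<in> S)"

definition congestion :: "'m set \<Rightarrow> 'm job set \<Rightarrow> nat" where
  "congestion M J = Max (insert 0 ((\<lambda>m. \<Sum>j\<in>J. card {i. i < length (fst j) \<and> fst j ! i = m}) ` M))"

definition dilation :: "'m job set \<Rightarrow> nat" where
  "dilation J = Max (insert 0 ((\<lambda>j. length (fst j)) ` J))"

definition virt :: "('m job \<Rightarrow> nat) \<Rightarrow> 'm job \<Rightarrow> nat \<Rightarrow> nat" where
  "virt h j i = h j + i"

definition bad_pattern :: "'m set \<Rightarrow> nat \<Rightarrow> nat \<Rightarrow> 'm job set
    \<Rightarrow> (nat \<Rightarrow> 'm \<Rightarrow> ('m job \<times> nat) set) \<Rightarrow> bool" where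
  "bad_pattern M L l J B \<longleftrightarrow>
     (\<forall>T<2*L. \<forall>m\<in>M. \<forall>(j,i)\<in>B T m. j \<in> J \<and> i < length (fst j) \<and> fst j ! i = m)
   \<and> (\<forall>T1<2*L. \<forall>m1\<in>M. \<forall>T2<2*L. \<forall>m2\<in>M. \<forall>j i1 i2.
        (j,i1) \<in> B T1 m1 \<longrightarrow> (j,i2) \<in> B T2 m2 \<longrightarrow> T1 = T2 \<and> m1 = m2 \<and> i1 = i2)
   \<and> (\<forall>T<2*L. \<forall>m\<in>M. B T m = {} \<or> (l < card (B T m) \<and> card (B T m) \<le> card J))
   \<and> 2 * (\<Sum>T<2*L. \<Sum>m\<in>M. card (B T m)) > card J"

definition occurs :: "'m set \<Rightarrow> nat \<Rightarrow> (nat \<Rightarrow> 'm \<Rightarrow> ('m job \<times> nat) set)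
    \<Rightarrow> ('m job \<Rightarrow> nat) \<Rightarrow> bool" where
  "occurs M L B h \<longleftrightarrow> (\<forall>T<2*L. \<forall>m\<in>M. \<forall>(j,i)\<in>B T m. virt h j i = T)"

definition good_for_jobs :: "'m set \<Rightarrow> nat \<Rightarrow> nat \<Rightarrow> 'm job set \<Rightarrow> ('m job \<Rightarrow> nat) \<Rightarrow> bool" where
  "good_for_jobs M L l J h \<longleftrightarrow> \<not> (\<exists>B. bad_pattern M L l J B \<and> occurs M L B h)"

definition good_family :: "'m set \<Rightarrow> real \<Rightarrow> 'm list set \<Rightarrow> nat \<Rightarrow> nat \<Rightarrow> nat
    \<Rightarrow> (nat \<Rightarrow> 'm job \<Rightarrow> nat) \<Rightarrow> bool" where
  "good_family M c S L l k hs \<longleftrightarrow>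
     (\<forall>J. job_set M c J \<and> supported S J \<and> congestion M J + dilation J \<le> L
          \<longrightarrow> (\<exists>i<k. good_for_jobs M L l J (hs i)))"

text \<open>k independent uniform hash functions, each given by its values on S \<times> I
  (the only values relevant for S-supported job sets).\<close>
definition random_hashes :: "'m set \<Rightarrow> real \<Rightarrow> 'm list set \<Rightarrow> nat \<Rightarrow> nat
    \<Rightarrow> (nat \<Rightarrow> 'm job \<Rightarrow> nat) pmf" where
  "random_hashes M c S L k =
     pmf_of_set (PiE {..<k} (\<lambda>_. PiE (S \<times> ids M c) (\<lambda>_. {..<L})))"

end

theory Submission
  imports Defs
begin

definition Pm :: "'m job set \<Rightarrow> 'm \<Rightarrow> ('m job \<times> nat) set" where
  "Pm J m = {(j,i). j \<in> J \<and> i < length (fst j) \<and> fst j ! i = m}"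

definition Al :: "'m job set \<Rightarrow> nat \<Rightarrow> nat \<times> 'm \<Rightarrow> ('m job \<times> nat) set set" where
  "Al J l q = {Y. Y \<subseteq> Pm J (snd q) \<and> (Y = {} \<or> l < card Y)}"

definition QQ :: "'m set \<Rightarrow> nat \<Rightarrow> (nat \<times> 'm) set" where
  "QQ M L = {..<2*L} \<times> M"

definition pdisj :: "(nat \<times> 'm) set \<Rightarrow> (nat \<times> 'm \<Rightarrow> ('m job \<times> nat) set) \<Rightarrow> bool" where
  "pdisj Q \<beta> \<longleftrightarrow> (\<forall>q1\<in>Q. \<forall>q2\<in>Q. \<forall>j i1 i2. (j,i1) \<in> \<beta> q1 \<longrightarrow> (j,i2) \<in> \<beta> q2 \<longrightarrow> q1 = q2 \<and> i1 = i2)"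

definition ssz :: "(nat \<times> 'm) set \<Rightarrow> (nat \<times> 'm \<Rightarrow> ('m job \<times> nat) set) \<Rightarrow> nat" where
  "ssz Q \<beta> = (\<Sum>q\<in>Q. card (\<beta> q))"

definition Pats :: "'m set \<Rightarrow> nat \<Rightarrow> nat \<Rightarrow> 'm job set \<Rightarrow> (nat \<times> 'm \<Rightarrow> ('m job \<times> nat) set) set" where
  "Pats M L l J = {\<beta> \<in> PiE (QQ M L) (Al J l). pdisj (QQ M L) \<beta> \<and> card J < 2 * ssz (QQ M L) \<beta>}"

definition occ :: "'m set \<Rightarrow> nat \<Rightarrow> (nat \<times> 'm \<Rightarrow> ('m job \<times> nat) set) \<Rightarrow> ('m job \<Rightarrow> nat) \<Rightarrow> bool" where
  "occ M L \<beta> h \<longleftrightarrow> (\<forall>q\<in>QQ M L. \<forall>(j,i)\<in>\<beta> q. h j + i = fst q)"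

lemma finite_Pm: "finite J \<Longrightarrow> finite (Pm J m)"
proof -
  assume "finite J"
  have "Pm J m \<subseteq> Sigma J (\<lambda>j. {..<length (fst j)})" unfolding Pm_def by auto
  moreover have "finite (Sigma J (\<lambda>j. {..<length (fst j)}))" using \<open>finite J\<close> by auto
  ultimately show ?thesis by (rule finite_subset)
qed

lemma finite_Al: "finite J \<Longrightarrow> finite (Al J l q)"
proof -
  assume "finite J"
  have "Al J l q \<subseteq> Pow (Pm J (snd q))" unfolding Al_def by auto
  thus ?thesis using finite_Pm[OF \<open>finite J\<close>] by (meson finite_Pow_iff finite_subset)
qed

lemma finite_QQ: "finite M \<Longrightarrow> finite (QQ M L)" unfolding QQ_def by auto

lemma finite_Pats: "finite M \<Longrightarrow> finite J \<Longrightarrow> finite (Pats M L l J)"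
proof -
  assume a: "finite M" "finite J"
  have "finite (PiE (QQ M L) (Al J l))" using a finite_QQ finite_Al by (intro finite_PiE) auto
  thus ?thesis unfolding Pats_def by auto
qed

lemma extract_pat:
  assumes "finite J" "\<not> good_for_jobs M L l J h"
  shows "\<exists>\<beta>\<in>Pats M L l J. occ M L \<beta> h"
proof -
  from assms obtain B where bp: "bad_pattern M L l J B" and oc: "occurs M L B h"
    unfolding good_for_jobs_def by blast
  define \<beta> where "\<beta> = (\<lambda>q\<in>QQ M L. B (fst q) (snd q))"
  note bp1 = bp[unfolded bad_pattern_def]
  have inP: "\<beta> \<in> PiE (QQ M L) (Al J l)"
  proof
    fix q assume q: "q \<in> QQ M L"
    obtain T m where qq: "q = (T,m)" by force
    have T: "T < 2*L" "m \<in> M" using q qq unfolding QQ_def by auto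
    have "B T m \<subseteq> Pm J m" using bp1 T unfolding Pm_def by fast
    moreover have "B T m = {} \<or> l < card (B T m)" using bp1 T by blast
    ultimately show "\<beta> q \<in> Al J l q" unfolding \<beta>_def Al_def using q qq by auto
  next
    fix q assume "q \<notin> QQ M L" thus "\<beta> q = undefined" unfolding \<beta>_def by auto
  qed
  have dj: "pdisj (QQ M L) \<beta>"
    unfolding pdisj_def \<beta>_def QQ_def
  proof (intro ballI allI impI)
    fix q1 q2 j i1 i2
    assume q: "q1 \<in> {..<2 * L} \<times> M" "q2 \<in> {..<2 * L} \<times> M"
      and h: "(j, i1) \<in> (\<lambda>q\<in>{..<2 * L} \<times> M. B (fst q) (snd q)) q1"
        "(j, i2) \<in> (\<lambda>q\<in>{..<2 * L} \<times> M. B (fst q) (snd q)) q2"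
    obtain T1 m1 T2 m2 where qs: "q1 = (T1,m1)" "q2 = (T2,m2)" by force
    have "T1 < 2*L" "m1 \<in> M" "T2 < 2*L" "m2 \<in> M" using q qs by auto
    moreover have "(j,i1) \<in> B T1 m1" "(j,i2) \<in> B T2 m2" using h q qs by auto
    ultimately have "T1 = T2 \<and> m1 = m2 \<and> i1 = i2" using bp1 by blast
    thus "q1 = q2 \<and> i1 = i2" using qs by auto
  qed
  have "ssz (QQ M L) \<beta> = (\<Sum>q\<in>{..<2*L} \<times> M. card (B (fst q) (snd q)))"
    unfolding ssz_def \<beta>_def QQ_def by (intro sum.cong) auto
  also have "\<dots> = (\<Sum>T<2*L. \<Sum>m\<in>M. card (B T m))"
    by (simp add: sum.cartesian_product case_prod_beta)
  finally have sz: "card J < 2 * ssz (QQ M L) \<beta>" using bp1 by simp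
  have "occ M L \<beta> h"
    unfolding occ_def
  proof (rule ballI)
    fix q assume q: "q \<in> QQ M L"
    obtain T m where qq: "q = (T,m)" by force
    have T: "T < 2*L" "m \<in> M" using q qq unfolding QQ_def by auto
    show "\<forall>(j, i)\<in>\<beta> q. h j + i = fst q"
      using oc T q qq unfolding occurs_def virt_def \<beta>_def by auto
  qed
  thus ?thesis using inP dj sz unfolding Pats_def by blast
qed

lemma count_pat:
  assumes fM: "finite M" and fJ: "finite J" and fD: "finite D" and JD: "J \<subseteq> D"
    and bP: "\<beta> \<in> Pats M L l J"
  shows "ssz (QQ M L) \<beta> \<le> card D"
    and "card {h \<in> PiE D (\<lambda>_. {..<L}). occ M L \<beta> h} \<le> L ^ (card D - ssz (QQ M L) \<beta>)"
proof -
  let ?Q = "QQ M L"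
  have bPi: "\<beta> \<in> PiE ?Q (Al J l)" and dj: "pdisj ?Q \<beta>" using bP unfolding Pats_def by auto
  have sub: "\<And>q. q \<in> ?Q \<Longrightarrow> \<beta> q \<subseteq> Pm J (snd q)" using bPi unfolding Al_def by auto
  have fin: "\<And>q. q \<in> ?Q \<Longrightarrow> finite (\<beta> q)" using sub finite_Pm[OF fJ] finite_subset by blast
  define U where "U = (\<Union>q\<in>?Q. \<beta> q)"
  define X where "X = fst ` U"
  have cU: "card U = ssz ?Q \<beta>" unfolding U_def ssz_def
  proof (rule card_UN_disjoint)
    show "finite ?Q" using finite_QQ[OF fM] .
    show "\<forall>i\<in>?Q. finite (\<beta> i)" using fin by auto
    show "\<forall>i\<in>?Q. \<forall>j\<in>?Q. i \<noteq> j \<longrightarrow> \<beta> i \<inter> \<beta> j = {}"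
      using dj unfolding pdisj_def by fast
  qed
  have inj: "inj_on fst U"
  proof (rule inj_onI)
    fix x y assume "x \<in> U" "y \<in> U" "fst x = fst y"
    then obtain q1 q2 where "q1 \<in> ?Q" "q2 \<in> ?Q" "x \<in> \<beta> q1" "y \<in> \<beta> q2" unfolding U_def by auto
    with dj \<open>fst x = fst y\<close> show "x = y" unfolding pdisj_def
      by (metis prod.collapse)
  qed
  have cX: "card X = ssz ?Q \<beta>" unfolding X_def using card_image[OF inj] cU by simp
  have XJ: "X \<subseteq> J" unfolding X_def U_def using sub unfolding Pm_def by fastforce
  have XD: "X \<subseteq> D" using XJ JD by auto
  have fX: "finite X" using XD fD finite_subset by blast
  show "ssz ?Q \<beta> \<le> card D" using cX card_mono[OF fD XD] by simp
  let ?H = "{h \<in> PiE D (\<lambda>_. {..<L}). occ M L \<beta> h}"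
  have injr: "inj_on (\<lambda>h. restrict h (D - X)) ?H"
  proof (rule inj_onI)
    fix h h' assume h: "h \<in> ?H" and h': "h' \<in> ?H" and eq: "restrict h (D - X) = restrict h' (D - X)"
    show "h = h'"
    proof
      fix x
      show "h x = h' x"
      proof (cases "x \<in> D")
        case False
        have "h \<in> PiE D (\<lambda>_. {..<L})" "h' \<in> PiE D (\<lambda>_. {..<L})" using h h' by blast+
        thus ?thesis using False by (metis PiE_arb)
      next
        case True
        show ?thesis
        proof (cases "x \<in> X")
          case False
          thus ?thesis using True eq by (metis Diff_iff restrict_apply')
        next
          case xX: True
          then obtain u where "u \<in> U" "x = fst u" unfolding X_def by auto
          then obtain q i where q: "q \<in> ?Q" "(x,i) \<in> \<beta> q" unfolding U_def by (metis UN_E prod.collapse)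
          have "h x + i = fst q" "h' x + i = fst q" using h h' q unfolding occ_def by fastforce+
          thus ?thesis by simp
        qed
      qed
    qed
  qed
  have img: "(\<lambda>h. restrict h (D - X)) ` ?H \<subseteq> PiE (D - X) (\<lambda>_. {..<L})"
  proof (rule image_subsetI)
    fix h assume "h \<in> ?H"
    hence hP: "h \<in> PiE D (\<lambda>_. {..<L})" by blast
    show "restrict h (D - X) \<in> PiE (D - X) (\<lambda>_. {..<L})"
      unfolding restrict_PiE_iff using PiE_mem[OF hP] by blast
  qed
  have "card ?H \<le> card (PiE (D - X) (\<lambda>_. {..<L}))"
    using card_inj_on_le[OF injr img] fD by (simp add: finite_PiE)
  also have "\<dots> = L ^ card (D - X)" using fD by (simp add: card_PiE)
  also have "card (D - X) = card D - ssz ?Q \<beta>" using card_Diff_subset[OF fX XD] cX by simp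
  finally show "card ?H \<le> L ^ (card D - ssz (QQ M L) \<beta>)" .
qed

lemma count_bad:
  assumes fM: "finite M" and fJ: "finite J" and fD: "finite D" and JD: "J \<subseteq> D" and L: "L \<ge> 1"
  shows "real (card (PiE D (\<lambda>_. {..<L}) \<inter> {h. \<not> good_for_jobs M L l J h})) / real (card (PiE D (\<lambda>_. {..<L})))
     \<le> (\<Sum>\<beta>\<in>Pats M L l J. (1 / real L) ^ ssz (QQ M L) \<beta>)"
proof -
  let ?F = "PiE D (\<lambda>_. {..<L})"
  let ?P = "Pats M L l J"
  have fP: "finite ?P" by (rule finite_Pats[OF fM fJ])
  have fF: "finite ?F" using fD by (simp add: finite_PiE)
  have sub: "?F \<inter> {h. \<not> good_for_jobs M L l J h} \<subseteq> (\<Union>\<beta>\<in>?P. {h \<in> ?F. occ M L \<beta> h})"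
  proof
    fix h assume h: "h \<in> ?F \<inter> {h. \<not> good_for_jobs M L l J h}"
    then obtain \<beta> where "\<beta> \<in> ?P" "occ M L \<beta> h" using extract_pat[OF fJ, of M L l h] by auto
    thus "h \<in> (\<Union>\<beta>\<in>?P. {h \<in> ?F. occ M L \<beta> h})" using h by auto
  qed
  have fU: "finite (\<Union>\<beta>\<in>?P. {h \<in> ?F. occ M L \<beta> h})"
    using fP fF by (intro finite_UN_I) auto
  have "card (?F \<inter> {h. \<not> good_for_jobs M L l J h}) \<le> card (\<Union>\<beta>\<in>?P. {h \<in> ?F. occ M L \<beta> h})"
    by (rule card_mono[OF fU sub])
  also have "\<dots> \<le> (\<Sum>\<beta>\<in>?P. card {h \<in> ?F. occ M L \<beta> h})" by (rule card_UN_le[OF fP])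
  also have "\<dots> \<le> (\<Sum>\<beta>\<in>?P. L ^ (card D - ssz (QQ M L) \<beta>))"
    by (intro sum_mono count_pat(2)[OF fM fJ fD JD])
  finally have c0: "card (?F \<inter> {h. \<not> good_for_jobs M L l J h}) \<le> (\<Sum>\<beta>\<in>?P. L ^ (card D - ssz (QQ M L) \<beta>))" .
  have c: "real (card (?F \<inter> {h. \<not> good_for_jobs M L l J h})) \<le> (\<Sum>\<beta>\<in>?P. real L ^ (card D - ssz (QQ M L) \<beta>))"
    using of_nat_mono[OF c0, where 'a=real] by (simp add: of_nat_sum)
  have cF: "real (card ?F) = real L ^ card D" using fD by (simp add: card_PiE)
  have Lp: "real L > 0" using L by simp
  have "real (card (?F \<inter> {h. \<not> good_for_jobs M L l J h})) / real (card ?F)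
     \<le> (\<Sum>\<beta>\<in>?P. real L ^ (card D - ssz (QQ M L) \<beta>)) / real L ^ card D"
    unfolding cF by (rule divide_right_mono[OF c]) (use Lp in simp)
  also have "\<dots> = (\<Sum>\<beta>\<in>?P. real L ^ (card D - ssz (QQ M L) \<beta>) / real L ^ card D)"
    by (simp add: sum_divide_distrib)
  also have "\<dots> = (\<Sum>\<beta>\<in>?P. (1 / real L) ^ ssz (QQ M L) \<beta>)"
  proof (rule sum.cong)
    fix \<beta> assume "\<beta> \<in> ?P"
    hence le: "ssz (QQ M L) \<beta> \<le> card D" using count_pat(1)[OF fM fJ fD JD] by blast
    have "real L ^ card D = real L ^ (card D - ssz (QQ M L) \<beta>) * real L ^ ssz (QQ M L) \<beta>"
      using le by (simp add: power_add[symmetric])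
    thus "real L ^ (card D - ssz (QQ M L) \<beta>) / real L ^ card D = (1 / real L) ^ ssz (QQ M L) \<beta>"
      using Lp by (simp add: power_one_over)
  qed simp
  finally show ?thesis .
qed

lemma tilt:
  assumes fM: "finite M" and fJ: "finite J" and mu: "\<mu> \<ge> 1" and L: "L \<ge> 1"
  shows "(\<Sum>\<beta>\<in>Pats M L l J. (1 / real L) ^ ssz (QQ M L) \<beta>)
    \<le> \<mu> powr (- real (card J) / 2) * (\<Prod>q\<in>QQ M L. \<Sum>Y\<in>Al J l q. (\<mu> / real L) ^ card Y)"
proof -
  let ?Q = "QQ M L"
  let ?P = "Pats M L l J"
  let ?c = "\<mu> powr (- real (card J) / 2)"
  have mu0: "\<mu> > 0" using mu by simp
  have "(\<Sum>\<beta>\<in>?P. (1 / real L) ^ ssz ?Q \<beta>) \<le> (\<Sum>\<beta>\<in>?P. ?c * (\<mu> / real L) ^ ssz ?Q \<beta>)"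
  proof (rule sum_mono)
    fix \<beta> assume b: "\<beta> \<in> ?P"
    let ?s = "ssz ?Q \<beta>"
    have ns: "real (card J) / 2 \<le> real ?s" using b unfolding Pats_def by auto
    have "1 \<le> \<mu> powr (real ?s - real (card J) / 2)" using mu ns by (intro ge_one_powr_ge_zero) auto
    also have "\<dots> = ?c * \<mu> ^ ?s"
      using mu0 by (simp add: powr_add[symmetric] powr_realpow[symmetric])
    finally have "1 \<le> ?c * \<mu> ^ ?s" .
    hence "(1 / real L) ^ ?s * 1 \<le> (1 / real L) ^ ?s * (?c * \<mu> ^ ?s)"
      by (intro mult_left_mono) auto
    thus "(1 / real L) ^ ?s \<le> ?c * (\<mu> / real L) ^ ?s"
      by (simp add: power_divide mult_ac)
  qed
  also have "\<dots> = ?c * (\<Sum>\<beta>\<in>?P. (\<mu> / real L) ^ ssz ?Q \<beta>)" by (simp add: sum_distrib_left)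
  also have "(\<Sum>\<beta>\<in>?P. (\<mu> / real L) ^ ssz ?Q \<beta>) \<le> (\<Sum>\<beta>\<in>PiE ?Q (Al J l). (\<mu> / real L) ^ ssz ?Q \<beta>)"
  proof (rule sum_mono2)
    show "finite (PiE ?Q (Al J l))" using finite_QQ[OF fM] finite_Al[OF fJ] by (intro finite_PiE) auto
    show "?P \<subseteq> PiE ?Q (Al J l)" unfolding Pats_def by auto
  qed (use mu0 in auto)
  also have "(\<Sum>\<beta>\<in>PiE ?Q (Al J l). (\<mu> / real L) ^ ssz ?Q \<beta>)
      = (\<Sum>\<beta>\<in>PiE ?Q (Al J l). \<Prod>q\<in>?Q. (\<mu> / real L) ^ card (\<beta> q))"
    unfolding ssz_def by (simp add: power_sum)
  also have "\<dots> = (\<Prod>q\<in>?Q. \<Sum>Y\<in>Al J l q. (\<mu> / real L) ^ card Y)"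
    by (rule prod_sum_PiE[symmetric]) (use finite_QQ[OF fM] finite_Al[OF fJ] in auto)
  finally show ?thesis using mu0 by (simp add: mult_left_mono)
qed

lemma pow_le_exp_fact: "real r ^ r \<le> exp (real r) * fact r"
proof (induction r)
  case 0 thus ?case by simp
next
  case (Suc n)
  show ?case
  proof (cases "n = 0")
    case True thus ?thesis using exp_ge_add_one_self[of 1] by simp
  next
    case False
    hence np: "real n > 0" by simp
    have "(1 + 1 / real n) ^ n \<le> exp 1"
      using exp_ge_one_plus_x_over_n_power_n[of n 1] np by simp
    hence "real (Suc n) ^ n = real n ^ n * (1 + 1 / real n) ^ n \<and> (1 + 1 / real n) ^ n \<le> exp 1"
      using np by (simp add: power_mult_distrib[symmetric] field_simps)
    hence "real (Suc n) ^ n \<le> real n ^ n * exp 1"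
      by (metis mult_left_mono zero_le_power of_nat_0_le_iff)
    also have "\<dots> \<le> exp (real n) * fact n * exp 1" using Suc.IH by (simp add: mult_right_mono)
    finally have a: "real (Suc n) ^ n \<le> exp (real n) * fact n * exp 1" .
    have "real (Suc n) ^ Suc n = real (Suc n) * real (Suc n) ^ n" by simp
    also have "\<dots> \<le> real (Suc n) * (exp (real n) * fact n * exp 1)"
      using a by (intro mult_left_mono) auto
    also have "\<dots> = exp (real (Suc n)) * fact (Suc n)"
      by (simp add: exp_add[symmetric] algebra_simps)
    finally show ?thesis .
  qed
qed

lemma term_bound:
  assumes r: "l < r" and mu: "\<mu> > 0" and t: "exp 1 * \<mu> / real (Suc l) \<le> 1"
  shows "\<mu> ^ r / fact r \<le> (exp 1 * \<mu> / real (Suc l)) ^ Suc l"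
proof -
  let ?t = "exp 1 * \<mu> / real (Suc l)"
  have rp: "real r > 0" using r by simp
  have f: "real r ^ r \<le> exp (real r) * fact r" by (rule pow_le_exp_fact)
  have "\<mu> ^ r / fact r \<le> \<mu> ^ r * exp (real r) / real r ^ r"
  proof -
    have "\<mu> ^ r * real r ^ r \<le> \<mu> ^ r * (exp (real r) * fact r)"
      using f mu by (intro mult_left_mono) auto
    thus ?thesis using rp by (simp add: field_simps)
  qed
  also have "\<dots> = (exp 1 * \<mu> / real r) ^ r"
    by (simp add: power_divide power_mult_distrib exp_of_nat_mult[symmetric] mult_ac)
  also have "\<dots> \<le> ?t ^ r"
    using r mu by (intro power_mono divide_left_mono) auto
  also have "\<dots> \<le> ?t ^ Suc l"
    using r t mu by (intro power_decreasing) auto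
  finally show ?thesis .
qed

lemma card_Pm: "finite J \<Longrightarrow> card (Pm J m) = (\<Sum>j\<in>J. card {i. i < length (fst j) \<and> fst j ! i = m})"
proof -
  assume fJ: "finite J"
  have "Pm J m = Sigma J (\<lambda>j. {i. i < length (fst j) \<and> fst j ! i = m})" unfolding Pm_def by auto
  thus ?thesis using fJ by (simp add: card_SigmaI)
qed

lemma Pm_le_cong: "finite M \<Longrightarrow> finite J \<Longrightarrow> m \<in> M \<Longrightarrow> card (Pm J m) \<le> congestion M J"
  unfolding congestion_def card_Pm by (intro Max_ge) auto

lemma factor_bound:
  assumes fJ: "finite J" and p: "card (Pm J m) \<le> L" and L: "L \<ge> 1" and mu: "\<mu> > 0"
    and t: "exp 1 * \<mu> / real (Suc l) \<le> 1"
  shows "(\<Sum>Y\<in>Al J l (T,m). (\<mu> / real L) ^ card Y) \<le> 1 + real L * (exp 1 * \<mu> / real (Suc l)) ^ Suc l"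
proof -
  let ?P = "Pm J m"
  let ?p = "card ?P"
  let ?x = "\<mu> / real L"
  let ?t = "exp 1 * \<mu> / real (Suc l)"
  have fP: "finite ?P" by (rule finite_Pm[OF fJ])
  define Big where "Big = {Y. Y \<subseteq> ?P \<and> l < card Y}"
  have fBig: "finite Big" unfolding Big_def using fP by auto
  have Aeq: "Al J l (T,m) = insert {} Big" unfolding Al_def Big_def by auto
  have ne: "{} \<notin> Big" unfolding Big_def by auto
  have "(\<Sum>Y\<in>Al J l (T,m). ?x ^ card Y) = 1 + (\<Sum>Y\<in>Big. ?x ^ card Y)"
    unfolding Aeq using fBig ne by simp
  also have "(\<Sum>Y\<in>Big. ?x ^ card Y) = (\<Sum>r\<in>{l<..?p}. \<Sum>Y\<in>{Y \<in> Big. card Y = r}. ?x ^ card Y)"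
  proof (rule sum.group[symmetric])
    show "finite Big" by fact
    show "finite {l<..?p}" by simp
    show "card ` Big \<subseteq> {l<..?p}" unfolding Big_def using fP by (auto intro: card_mono)
  qed
  also have "\<dots> = (\<Sum>r\<in>{l<..?p}. real (?p choose r) * ?x ^ r)"
  proof (rule sum.cong)
    fix r assume r: "r \<in> {l<..?p}"
    have "{Y \<in> Big. card Y = r} = {Y. Y \<subseteq> ?P \<and> card Y = r}" using r unfolding Big_def by auto
    hence "card {Y \<in> Big. card Y = r} = ?p choose r" using n_subsets[OF fP] by simp
    moreover have "(\<Sum>Y\<in>{Y \<in> Big. card Y = r}. ?x ^ card Y) = real (card {Y \<in> Big. card Y = r}) * ?x ^ r"
      by simp
    ultimately show "(\<Sum>Y\<in>{Y \<in> Big. card Y = r}. ?x ^ card Y) = real (?p choose r) * ?x ^ r" by simp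
  qed simp
  also have "\<dots> \<le> (\<Sum>r\<in>{l<..?p}. ?t ^ Suc l)"
  proof (rule sum_mono)
    fix r assume r: "r \<in> {l<..?p}"
    have c: "real (?p choose r) * fact r \<le> real ?p ^ r"
      using binomial_fact_pow[of ?p r] by (metis of_nat_fact of_nat_le_iff of_nat_mult of_nat_power)
    have fp: "(fact r :: real) > 0" by simp
    have "real (?p choose r) * ?x ^ r \<le> real ?p ^ r / fact r * ?x ^ r"
      using c fp mu by (intro mult_right_mono) (auto simp: field_simps)
    also have "\<dots> = (real ?p * ?x) ^ r / fact r" by (simp only: power_mult_distrib times_divide_eq_left)
    also have "\<dots> \<le> \<mu> ^ r / fact r"
    proof -
      have "real ?p * ?x \<le> \<mu>" using p L mu by (simp add: field_simps mult_right_mono)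
      hence "(real ?p * ?x) ^ r \<le> \<mu> ^ r" using mu by (intro power_mono) auto
      thus ?thesis by (simp add: divide_right_mono)
    qed
    also have "\<dots> \<le> ?t ^ Suc l" using term_bound[of l r \<mu>] r mu t by auto
    finally show "real (?p choose r) * ?x ^ r \<le> ?t ^ Suc l" .
  qed
  also have "\<dots> = real (?p - l) * ?t ^ Suc l" by simp
  also have "\<dots> \<le> real L * ?t ^ Suc l"
    using p mu by (intro mult_right_mono) auto
  finally show ?thesis by simp
qed

lemma bad_large:
  assumes "\<not> good_for_jobs M L l J h"
  shows "l < card J"
proof -
  from assms obtain B where bp: "bad_pattern M L l J B"
    unfolding good_for_jobs_def by blast
  note b = bp[unfolded bad_pattern_def]
  show ?thesis
  proof (rule ccontr)
    assume "\<not> l < card J"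
    hence "\<forall>T<2*L. \<forall>m\<in>M. B T m = {}" using b by fastforce
    hence "(\<Sum>T<2*L. \<Sum>m\<in>M. card (B T m)) = 0" by simp
    thus False using b by simp
  qed
qed

lemma perJ:
  fixes l :: nat
  defines "\<mu> \<equiv> real l powr (1/3)"
  assumes fM: "finite M" and fJ: "finite J" and fD: "finite D" and JD: "J \<subseteq> D" and L: "L \<ge> 1"
    and cong: "congestion M J \<le> L" and l24: "l \<ge> 24"
    and t: "exp 1 * \<mu> / real (Suc l) \<le> 1"
    and small: "real (2 * L * card M) * (real L * (exp 1 * \<mu> / real (Suc l)) ^ Suc l) \<le> 1"
  shows "real (card (PiE D (\<lambda>_. {..<L}) \<inter> {h. \<not> good_for_jobs M L l J h})) / real (card (PiE D (\<lambda>_. {..<L})))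
     \<le> real l powr (- real (card J) / 8)"
proof (cases "PiE D (\<lambda>_. {..<L}) \<inter> {h. \<not> good_for_jobs M L l J h} = {}")
  case True thus ?thesis by simp
next
  case False
  then obtain h where "\<not> good_for_jobs M L l J h" by auto
  hence nl: "l < card J" by (rule bad_large)
  let ?n = "real (card J)"
  let ?t = "exp 1 * \<mu> / real (Suc l)"
  let ?d = "real L * ?t ^ Suc l"
  let ?Q = "QQ M L"
  have lpos: "real l > 0" using l24 by simp
  have mu1: "\<mu> \<ge> 1" unfolding \<mu>_def using l24 by (intro ge_one_powr_ge_zero) auto
  hence mu0: "\<mu> > 0" by simp
  have d0: "?d \<ge> 0" using mu0 by simp
  have cQ: "card ?Q = 2 * L * card M" unfolding QQ_def by (simp add: card_cartesian_product)
  have "real (card (PiE D (\<lambda>_. {..<L}) \<inter> {h. \<not> good_for_jobs M L l J h})) / real (card (PiE D (\<lambda>_. {..<L})))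
     \<le> (\<Sum>\<beta>\<in>Pats M L l J. (1 / real L) ^ ssz ?Q \<beta>)" by (rule count_bad[OF fM fJ fD JD L])
  also have "\<dots> \<le> \<mu> powr (- ?n / 2) * (\<Prod>q\<in>?Q. \<Sum>Y\<in>Al J l q. (\<mu> / real L) ^ card Y)"
    by (rule tilt[OF fM fJ mu1 L])
  also have "(\<Prod>q\<in>?Q. \<Sum>Y\<in>Al J l q. (\<mu> / real L) ^ card Y) \<le> (\<Prod>q\<in>?Q. 1 + ?d)"
  proof (rule prod_mono)
    fix q assume q: "q \<in> ?Q"
    obtain T m where qq: "q = (T,m)" by force
    have m: "m \<in> M" using q qq unfolding QQ_def by auto
    have p: "card (Pm J m) \<le> L" using Pm_le_cong[OF fM fJ m] cong by simp
    have "(\<Sum>Y\<in>Al J l q. (\<mu> / real L) ^ card Y) \<le> 1 + ?d"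
      unfolding qq by (rule factor_bound[OF fJ p L mu0 t])
    moreover have "0 \<le> (\<Sum>Y\<in>Al J l q. (\<mu> / real L) ^ card Y)" using mu0 by (intro sum_nonneg) auto
    ultimately show "0 \<le> (\<Sum>Y\<in>Al J l q. (\<mu> / real L) ^ card Y) \<and> (\<Sum>Y\<in>Al J l q. (\<mu> / real L) ^ card Y) \<le> 1 + ?d"
      by simp
  qed
  also have "(\<Prod>q\<in>?Q. 1 + ?d) = (1 + ?d) ^ (2 * L * card M)" using cQ by simp
  also have "\<dots> \<le> exp ?d ^ (2 * L * card M)"
    using d0 by (intro power_mono) (auto simp: exp_ge_add_one_self add_nonneg_nonneg)
  also have "\<dots> = exp (real (2 * L * card M) * ?d)" by (simp add: exp_of_nat_mult[symmetric])
  also have "\<dots> \<le> exp 1" using small by simp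
  finally have a: "real (card (PiE D (\<lambda>_. {..<L}) \<inter> {h. \<not> good_for_jobs M L l J h})) / real (card (PiE D (\<lambda>_. {..<L})))
     \<le> \<mu> powr (- ?n / 2) * exp 1"
    using mu0 by (simp add: mult_left_mono)
  have mueq: "\<mu> powr (- ?n / 2) = real l powr (- ?n / 6)"
    unfolding \<mu>_def using lpos by (simp add: powr_powr)
  have "exp 1 \<le> real l" using exp_le l24 by linarith
  also have "real l = real l powr 1" using lpos by simp
  also have "\<dots> \<le> real l powr (?n / 24)" using nl l24 by (intro powr_mono) auto
  finally have e: "exp 1 \<le> real l powr (?n / 24)" .
  have "\<mu> powr (- ?n / 2) * exp 1 \<le> real l powr (- ?n / 6) * real l powr (?n / 24)"
    unfolding mueq using e by (intro mult_left_mono) auto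
  also have "\<dots> = real l powr (- ?n / 8)" by (simp add: powr_add[symmetric])
  finally show ?thesis using a by linarith
qed

lemma ln_le_div_e: "(z::real) > 0 \<Longrightarrow> ln z \<le> z / exp 1"
proof -
  assume z: "z > 0"
  have "ln (z / exp 1) \<le> z / exp 1 - 1" using z by (intro ln_le_minus_one divide_pos_pos) auto
  moreover have "ln (z / exp 1) = ln z - 1" using z by (simp add: ln_div)
  ultimately show ?thesis by simp
qed

lemma an1:
  fixes m c x :: real and l :: nat
  assumes m: "m \<ge> 32" and c: "c \<ge> 1" and x: "x = ln m"
    and l: "real l \<ge> 150 * c * x / ln x"
  shows "real l \<ge> 300" and "real l * ln (real l) \<ge> 75 * c * x" and "x \<ge> ln 8"
proof -
  have e2: "exp 1 \<ge> (2::real)" using exp_ge_add_one_self[of 1] by simp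
  have "exp 1 \<le> (32::real)" using exp_le by simp
  hence "ln (exp 1) \<le> ln (32::real)" by (subst ln_le_cancel_iff) auto
  have em: "exp 1 \<le> m" using \<open>exp 1 \<le> 32\<close> m by linarith
  hence x1: "x \<ge> 1" unfolding x using m by (subst ln_ge_iff) auto
  hence lx0: "ln x \<ge> 0" by simp
  have x0: "x > 0" using x1 by simp
  show "x \<ge> ln 8" using m x by (subst x) (auto simp: ln_le_cancel_iff)
  have lxe: "ln x \<le> x / exp 1" by (rule ln_le_div_e[OF x0])
  have lxpos: "ln x > 0"
  proof (rule ccontr)
    assume "\<not> ln x > 0"
    hence "ln x = 0" using lx0 by simp
    hence "x = 1" using x0 by simp
    hence "ln m = 1" using x by simp
    moreover have "m > 0" using m by simp
    ultimately have "m = exp 1" using exp_ln[of m] by simp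
    thus False using m exp_le by linarith
  qed
  define y where "y = 150 * c * x / ln x"
  have "y \<ge> 150 * c * exp 1"
  proof -
    have "x / ln x \<ge> exp 1" using lxe lxpos by (simp add: field_simps)
    hence "150 * c * (x / ln x) \<ge> 150 * c * exp 1" using c by (intro mult_left_mono) auto
    thus ?thesis unfolding y_def by simp
  qed
  moreover have "150 * c * exp 1 \<ge> 300"
  proof -
    have "c * exp 1 \<ge> 1 * 2" using c e2 by (intro mult_mono) auto
    thus ?thesis by linarith
  qed
  ultimately have y300: "y \<ge> 300" by simp
  show "real l \<ge> 300" using y300 l unfolding y_def by simp
  have lly: "ln (ln x) \<le> ln x / 2"
  proof -
    have "ln (ln x) \<le> ln x / exp 1" by (rule ln_le_div_e[OF lxpos])
    also have "\<dots> \<le> ln x / 2" using e2 lxpos by (intro divide_left_mono) auto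
    finally show ?thesis .
  qed
  have "ln y = ln (150 * c) + ln x - ln (ln x)"
    unfolding y_def using c x0 lxpos by (simp add: ln_div ln_mult)
  moreover have "ln (150 * c) \<ge> 0" using c by simp
  ultimately have lny: "ln y \<ge> ln x / 2" using lly by linarith
  have "75 * c * x = y * (ln x / 2)" unfolding y_def using lxpos by (simp add: field_simps)
  also have "\<dots> \<le> y * ln y" using lny y300 by (intro mult_left_mono) auto
  also have "\<dots> \<le> real l * ln (real l)"
  proof (rule mult_mono)
    show "y \<le> real l" using l unfolding y_def by simp
    show "ln y \<le> ln (real l)" using y300 l unfolding y_def by (subst ln_le_cancel_iff) auto
    show "0 \<le> real l" by simp
    show "0 \<le> ln y" using y300 by simp
  qed
  finally show "real l * ln (real l) \<ge> 75 * c * x" .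
qed

lemma an2:
  fixes l L K :: nat and c x :: real
  defines "\<mu> \<equiv> real l powr (1/3)"
  assumes l300: "real l \<ge> 300" and lln: "real l * ln (real l) \<ge> 75 * c * x"
    and c: "c \<ge> 1" and x: "x = ln (real K)" and K: "real K \<ge> 32"
    and LK: "real L \<le> 2 * real K powr c" and L: "L \<ge> 1"
  shows "exp 1 * \<mu> / real (Suc l) \<le> 1"
    and "real (2 * L * K) * (real L * (exp 1 * \<mu> / real (Suc l)) ^ Suc l) \<le> 1"
proof -
  have lpos: "real l > 0" using l300 by simp
  have mu0: "\<mu> > 0" unfolding \<mu>_def using lpos by simp
  have mu3: "\<mu> ^ 3 = real l" unfolding \<mu>_def using lpos
    by (simp add: powr_realpow[symmetric] powr_powr)
  have mu_ge: "\<mu> \<ge> 3"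
  proof (rule ccontr)
    assume "\<not> \<mu> \<ge> 3"
    hence "\<mu> ^ 3 < 3 ^ 3" using mu0 by (intro power_strict_mono) auto
    thus False using mu3 l300 by simp
  qed
  have e3: "exp 1 \<le> (3::real)" using exp_le by simp
  let ?t = "exp 1 * \<mu> / real (Suc l)"
  have "exp 1 * \<mu> * \<mu> \<le> \<mu> * \<mu> * \<mu>" using e3 mu_ge mu0
    by (metis mult.commute mult_right_mono order_trans less_imp_le mult_nonneg_nonneg)
  also have "\<dots> = real l" using mu3 by (simp add: power3_eq_cube)
  also have "\<dots> \<le> real (Suc l)" by simp
  finally have a: "exp 1 * \<mu> * \<mu> \<le> real (Suc l)" .
  have tle: "?t \<le> 1 / \<mu>" using a mu0 by (simp add: field_simps)
  have t0: "?t \<ge> 0" using mu0 by simp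
  have "1 / \<mu> \<le> 1" using mu_ge by simp
  thus "?t \<le> 1" using tle by linarith
  have "?t ^ Suc l \<le> (1 / \<mu>) ^ Suc l" using tle t0 by (intro power_mono) auto
  also have "\<dots> = 1 / \<mu> ^ Suc l" by (simp add: power_one_over)
  also have "\<dots> = 1 / \<mu> powr real (Suc l)" using powr_realpow[OF mu0, of "Suc l"] by simp
  also have "\<dots> = \<mu> powr (- real (Suc l))" by (simp only: powr_minus_divide)
  also have "\<dots> = real l powr (- real (Suc l) / 3)" unfolding \<mu>_def using lpos by (simp add: powr_powr)
  finally have tb: "?t ^ Suc l \<le> real l powr (- real (Suc l) / 3)" .
  have Kpos: "real K > 0" using K by simp
  have x0: "x \<ge> 0" using x K by simp
  have "real (2 * L * K) * real L = 2 * real K * real L ^ 2" by (simp add: power2_eq_square)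
  also have "\<dots> \<le> 2 * real K * (2 * real K powr c) ^ 2"
    using LK Kpos by (intro mult_left_mono power_mono) auto
  also have "\<dots> = 8 * (real K powr c * real K powr c * real K)"
    by (simp add: power2_eq_square)
  also have "real K powr c * real K powr c * real K = real K powr (2 * c + 1)"
  proof -
    have "2 * c + 1 = (c + c) + 1" by simp
    hence "real K powr (2 * c + 1) = real K powr (c + c) * real K powr 1" by (simp only: powr_add)
    also have "\<dots> = real K powr c * real K powr c * real K" using Kpos by (simp only: powr_add powr_one_gt_zero_iff powr_one)
    finally show ?thesis by simp
  qed
  also have "8 * real K powr (2 * c + 1) \<le> real K * real K powr (2 * c + 1)" using K by (intro mult_right_mono) auto
  also have "\<dots> = real K powr (2 * c + 2)"
  proof -
    have "2 * c + 2 = (2 * c + 1) + 1" by simp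
    hence "real K powr (2 * c + 2) = real K powr (2 * c + 1) * real K powr 1" by (simp only: powr_add)
    thus ?thesis using Kpos by simp
  qed
  also have "\<dots> \<le> real K powr (25 * c)" using K c by (intro powr_mono) auto
  also have "\<dots> = exp (25 * c * x)" using Kpos x by (simp add: powr_def)
  also have "\<dots> \<le> exp (real l * ln (real l) / 3)" using lln by simp
  also have "\<dots> \<le> exp (real (Suc l) * ln (real l) / 3)"
    using l300 by (intro exp_mono divide_right_mono mult_right_mono) auto
  also have "\<dots> = real l powr (real (Suc l) / 3)" using lpos by (simp add: powr_def)
  finally have sz: "real (2 * L * K) * real L \<le> real l powr (real (Suc l) / 3)" .
  have "real (2 * L * K) * (real L * ?t ^ Suc l) \<le> real (2 * L * K) * (real L * real l powr (- real (Suc l) / 3))"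
    by (intro mult_left_mono tb) auto
  also have "\<dots> = real (2 * L * K) * real L * real l powr (- real (Suc l) / 3)" by (simp only: mult.assoc)
  also have "\<dots> \<le> real l powr (real (Suc l) / 3) * real l powr (- real (Suc l) / 3)"
    using sz by (intro mult_right_mono) auto
  also have "\<dots> = real l powr (real (Suc l) / 3 + - real (Suc l) / 3)" by (simp only: powr_add)
  also have "real (Suc l) / 3 + - real (Suc l) / 3 = 0" by linarith
  also have "real l powr 0 = 1" using lpos by simp
  finally show "real (2 * L * K) * (real L * ?t ^ Suc l) \<le> 1" .
qed

lemma sum_Pow_pow:
  fixes a :: real
  assumes "finite D"
  shows "(\<Sum>J\<in>Pow D. a ^ card J) = (1 + a) ^ card D"
  using assms
proof (induction D rule: finite_induct)
  case empty thus ?case by simp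
next
  case (insert x F)
  have inj: "inj_on (insert x) (Pow F)"
    using insert.hyps(2) by (intro inj_onI) (metis Pow_iff insert_absorb insert_ident subsetD)
  have disj: "Pow F \<inter> insert x ` Pow F = {}" using insert.hyps(2) by auto
  have fP: "finite (Pow F)" using insert.hyps(1) by simp
  have "(\<Sum>J\<in>Pow (insert x F). a ^ card J) = (\<Sum>J\<in>Pow F. a ^ card J) + (\<Sum>J\<in>insert x ` Pow F. a ^ card J)"
    unfolding Pow_insert using disj fP by (intro sum.union_disjoint) auto
  also have "(\<Sum>J\<in>insert x ` Pow F. a ^ card J) = (\<Sum>J\<in>Pow F. a ^ card (insert x J))"
    using sum.reindex[OF inj] by simp
  also have "\<dots> = (\<Sum>J\<in>Pow F. a * a ^ card J)"
  proof (rule sum.cong)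
    fix J assume "J \<in> Pow F"
    hence "finite J" "x \<notin> J" using insert.hyps finite_subset by auto
    thus "a ^ card (insert x J) = a * a ^ card J" by simp
  qed simp
  also have "\<dots> = a * (\<Sum>J\<in>Pow F. a ^ card J)" by (simp add: sum_distrib_left)
  also have "\<dots> = a * (1 + a) ^ card F" using insert.IH by simp
  finally show ?case using insert.IH insert.hyps by (simp add: algebra_simps)
qed

lemma pow_minus_one:
  fixes a :: real
  assumes "a \<ge> 0"
  shows "(1 + a) ^ N - 1 \<le> real N * a * (1 + a) ^ N"
proof (induction N)
  case 0 thus ?case by simp
next
  case (Suc N)
  have p: "(1 + a) ^ N \<ge> 1" using assms by (simp add: one_le_power)
  have "(1 + a) ^ Suc N - 1 = (1 + a) * ((1 + a) ^ N - 1) + a" by (simp add: algebra_simps)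
  also have "\<dots> \<le> (1 + a) * (real N * a * (1 + a) ^ N) + a"
    using Suc.IH assms by (intro add_right_mono mult_left_mono) auto
  also have "\<dots> \<le> (1 + a) * (real N * a * (1 + a) ^ N) + a * (1 + a) ^ Suc N"
  proof -
    have "(1 + a) ^ Suc N \<ge> 1" using assms by (intro one_le_power) auto
    hence "a * 1 \<le> a * (1 + a) ^ Suc N" using assms by (intro mult_left_mono) auto
    thus ?thesis by simp
  qed
  also have "\<dots> = real (Suc N) * a * (1 + a) ^ Suc N" by (simp add: algebra_simps)
  finally show ?case .
qed

theorem lemma5p18:
  fixes M :: "'m set" and S :: "'m list set" and c b :: real and L l k :: nat
  assumes "finite M" and "card M \<ge> 32" and "c \<ge> 1"
    and "finite S" and "S \<noteq> {}" and "S \<subseteq> lists M"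
    and "L \<ge> 1" and "real L \<le> 2 * real (card M) powr c"
    and "real l \<ge> 150 * c * ln (card M) / ln (ln (card M))"
    and "real k \<ge> 8 * (b + 1) * (ln (card S) + (c + 1) * ln (card M)) / ln l"
  shows "measure_pmf.prob (random_hashes M c S L k) {hs. good_family M c S L l k hs}
           \<ge> 1 - 2 * real (card M) powr (- b)"
proof (cases "b < 0")
  case True
  have "real (card M) powr (- b) \<ge> 1" using True assms(2) by (intro ge_one_powr_ge_zero) auto
  hence "1 - 2 * real (card M) powr (- b) \<le> 0" by simp
  thus ?thesis by (meson measure_nonneg order_trans)
next
  case False
  hence b0: "b \<ge> 0" by simp
  note fM = assms(1) and M32 = assms(2) and c1 = assms(3) and fS = assms(4) and Sne = assms(5)
    and L1 = assms(7) and LM = assms(8) and lbound = assms(9) and kbound = assms(10)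
  define m where "m = real (card M)"
  define x where "x = ln m"
  have m32: "m \<ge> 32" unfolding m_def using M32 by simp
  have m0: "m > 0" using m32 by simp
  have an1s: "real l \<ge> 300" "real l * ln (real l) \<ge> 75 * c * x" "x \<ge> ln 8"
    using an1[OF m32 c1 x_def] lbound unfolding x_def m_def by auto
  have x0: "x > 0" using an1s(3) by (smt (verit) ln_gt_zero_iff one_less_numeral_iff semiring_norm(76) zero_less_numeral)
  have lpos: "real l > 0" using an1s(1) by simp
  have lnl: "ln (real l) > 0" using an1s(1) by simp
  define \<mu> where "\<mu> = real l powr (1/3)"
  have an2s: "exp 1 * \<mu> / real (Suc l) \<le> 1"
      "real (2 * L * card M) * (real L * (exp 1 * \<mu> / real (Suc l)) ^ Suc l) \<le> 1"
    using an2[OF an1s(1) an1s(2) c1 _ _ LM L1] x_def m_def M32 unfolding \<mu>_def by auto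
  define D where "D = S \<times> ids M c"
  have fids: "finite (ids M c)" unfolding ids_def by simp
  have fD: "finite D" unfolding D_def using fS fids by simp
  define F where "F = PiE D (\<lambda>_. {..<L::nat})"
  define H where "H = PiE {..<k} (\<lambda>_. F)"
  define Bad where "Bad = (\<lambda>J. {h. \<not> good_for_jobs M L l J h})"
  define E where "E = (\<lambda>J. {hs. \<forall>i<k. \<not> good_for_jobs M L l J (hs i)})"
  define G where "G = {hs. good_family M c S L l k hs}"
  define JS where "JS = {J \<in> Pow D. J \<noteq> {} \<and> congestion M J \<le> L}"
  define A where "A = ln (real (card S)) + (c + 1) * x"
  have S1: "real (card S) \<ge> 1" using fS Sne by (simp add: Suc_leI card_gt_0_iff)
  have A0: "A > 0" unfolding A_def using S1 x0 c1
    by (smt (verit) ln_ge_zero mult_pos_pos)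
  have kln: "real k * ln (real l) \<ge> 8 * (b + 1) * A"
    using kbound lnl unfolding A_def x_def m_def by (simp add: pos_divide_le_eq)
  have k1: "k \<ge> 1"
  proof (rule ccontr)
    assume "\<not> k \<ge> 1" hence "k = 0" by simp
    hence "8 * (b + 1) * A \<le> 0" using kln by simp
    moreover have "8 * (b + 1) * A > 0" using A0 b0 by simp
    ultimately show False by simp
  qed
  have fF: "finite F" unfolding F_def using fD by (simp add: finite_PiE)
  have Fne: "F \<noteq> {}" unfolding F_def using L1 by (auto simp: PiE_eq_empty_iff lessThan_empty_iff)
  have fH: "finite H" unfolding H_def using fF by (simp add: finite_PiE)
  have Hne: "H \<noteq> {}" unfolding H_def using Fne by (simp add: PiE_eq_empty_iff)
  have cF: "card F > 0" using fF Fne by (simp add: card_gt_0_iff)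
  have cH: "card H = card F ^ k" unfolding H_def by (simp add: card_PiE)
  have rh: "random_hashes M c S L k = pmf_of_set H"
    unfolding random_hashes_def H_def F_def D_def by simp
  have cover: "H - G \<subseteq> (\<Union>J\<in>JS. H \<inter> E J)"
  proof
    fix hs assume hs: "hs \<in> H - G"
    hence "\<not> good_family M c S L l k hs" unfolding G_def by simp
    then obtain J where J: "job_set M c J" "supported S J" "congestion M J + dilation J \<le> L"
        and ng: "\<not> (\<exists>i<k. good_for_jobs M L l J (hs i))"
      unfolding good_family_def by blast
    have JD: "J \<subseteq> D"
    proof
      fix j assume j: "j \<in> J"
      have "fst j \<in> S" using J(2) j unfolding supported_def by blast
      moreover have "snd j \<in> ids M c" using J(1) j unfolding job_set_def by blast
      ultimately show "j \<in> D" unfolding D_def by (simp add: mem_Times_iff)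
    qed
    have "\<not> good_for_jobs M L l J (hs 0)" using ng k1 by simp
    hence "l < card J" by (rule bad_large)
    hence "J \<noteq> {}" by auto
    hence "J \<in> JS" unfolding JS_def using JD J(3) by simp
    moreover have "hs \<in> H \<inter> E J" using hs ng unfolding E_def by auto
    ultimately show "hs \<in> (\<Union>J\<in>JS. H \<inter> E J)" by blast
  qed
  have fJS: "finite JS" unfolding JS_def using fD by simp
  define a where "a = real l powr (- real k / 8)"
  have a0: "a \<ge> 0" unfolding a_def by simp
  have perJS: "real (card (H \<inter> E J)) / real (card H) \<le> a ^ card J" if J: "J \<in> JS" for J
  proof -
    have JD: "J \<subseteq> D" and cg: "congestion M J \<le> L" using J unfolding JS_def by auto
    have fJ: "finite J" using JD fD finite_subset by blast
    have HE: "H \<inter> E J = PiE {..<k} (\<lambda>_. F \<inter> Bad J)"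
      unfolding H_def E_def Bad_def by (auto simp: PiE_iff)
    have cHE: "card (H \<inter> E J) = card (F \<inter> Bad J) ^ k" unfolding HE by (simp add: card_PiE)
    have r: "real (card (F \<inter> Bad J)) / real (card F) \<le> real l powr (- real (card J) / 8)"
      unfolding F_def Bad_def
      using perJ[OF fM fJ fD JD L1 cg _ an2s(1)[unfolded \<mu>_def] an2s(2)[unfolded \<mu>_def]] an1s(1) by simp
    have "real (card (H \<inter> E J)) / real (card H) = (real (card (F \<inter> Bad J)) / real (card F)) ^ k"
      unfolding cHE cH by (simp add: power_divide)
    also have "\<dots> \<le> (real l powr (- real (card J) / 8)) ^ k"
      using r by (intro power_mono) auto
    also have "\<dots> = real l powr (- real (card J) / 8 * real k)"
      using lpos by (simp add: powr_realpow[symmetric] powr_powr)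
    also have "\<dots> = a ^ card J"
      unfolding a_def using lpos by (simp add: powr_realpow[symmetric] powr_powr mult_ac)
    finally show ?thesis .
  qed
  define N where "N = card D"
  have "real (card (H - G)) \<le> real (card (\<Union>J\<in>JS. H \<inter> E J))"
    using cover fJS fH by (intro of_nat_mono card_mono) auto
  also have "\<dots> \<le> real (\<Sum>J\<in>JS. card (H \<inter> E J))" by (intro of_nat_mono card_UN_le fJS)
  also have "\<dots> = (\<Sum>J\<in>JS. real (card (H \<inter> E J)))" by simp
  finally have c1': "real (card (H - G)) / real (card H) \<le> (\<Sum>J\<in>JS. real (card (H \<inter> E J)) / real (card H))"
    unfolding sum_divide_distrib[symmetric] by (rule divide_right_mono) auto
  also have "\<dots> \<le> (\<Sum>J\<in>JS. a ^ card J)" by (intro sum_mono perJS)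
  also have "\<dots> \<le> (\<Sum>J\<in>Pow D - {{}}. a ^ card J)"
    using fD a0 by (intro sum_mono2) (auto simp: JS_def)
  also have "\<dots> = (1 + a) ^ N - 1"
    using sum_Pow_pow[OF fD, of a] fD unfolding N_def by (simp add: sum_diff1)
  also have "\<dots> \<le> real N * a * (1 + a) ^ N" by (rule pow_minus_one[OF a0])
  finally have main: "real (card (H - G)) / real (card H) \<le> real N * a * (1 + a) ^ N" .
  have cids: "real (card (ids M c)) \<le> m powr c"
  proof -
    have "card (ids M c) = nat \<lfloor>m powr c\<rfloor>" unfolding ids_def m_def by simp
    moreover have "real (nat \<lfloor>m powr c\<rfloor>) \<le> m powr c"
    proof -
      have "0 \<le> \<lfloor>m powr c\<rfloor>" by simp
      hence "real (nat \<lfloor>m powr c\<rfloor>) = real_of_int \<lfloor>m powr c\<rfloor>" by simp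
      also have "\<dots> \<le> m powr c" by (rule of_int_floor_le)
      finally show ?thesis .
    qed
    ultimately show ?thesis by simp
  qed
  have NS: "real N \<le> real (card S) * m powr c"
    unfolding N_def D_def using cids by (simp add: card_cartesian_product mult_left_mono)
  have aexp: "a \<le> exp (- (b + 1) * A)"
  proof -
    have "a = exp (- real k * ln (real l) / 8)" unfolding a_def powr_def using lpos by simp
    also have "\<dots> \<le> exp (- (b + 1) * A)"
    proof -
      have k8: "8 * ((b + 1) * A) \<le> real k * ln (real l)" using kln by (simp only: mult.assoc)
      have e1: "- real k * ln (real l) / 8 = - (real k * ln (real l)) / 8" by simp
      have e2: "- (b + 1) * A = - ((b + 1) * A)" by (simp add: algebra_simps)
      have "- real k * ln (real l) / 8 \<le> - (b + 1) * A" unfolding e1 e2 using k8 by linarith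
      thus ?thesis by simp
    qed
    finally show ?thesis .
  qed
  have Na: "real N * a \<le> m powr (- (b + 1))"
  proof -
    have "real N * a \<le> real (card S) * m powr c * exp (- (b + 1) * A)"
      using NS aexp a0 by (intro mult_mono) auto
    also have "real (card S) = exp (ln (real (card S)))" using S1 by simp
    also have "m powr c = exp (c * x)" unfolding x_def powr_def using m0 by (simp add: mult.commute)
    also have "exp (ln (real (card S))) * exp (c * x) * exp (- (b + 1) * A)
        = exp (ln (real (card S)) + c * x + (- (b + 1) * A))" by (simp only: exp_add)
    also have "\<dots> \<le> exp (- (b + 1) * x)"
    proof -
      have e: "ln (real (card S)) + c * x + (- (b + 1) * A)
          = - b * ln (real (card S)) - x - b * c * x - b * x" unfolding A_def by (simp add: algebra_simps)
      have "b * ln (real (card S)) \<ge> 0" using b0 S1 by simp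
      moreover have "b * c * x \<ge> 0" using b0 c1 x0 by simp
      ultimately show ?thesis unfolding e by (simp add: algebra_simps)
    qed
    also have "\<dots> = m powr (- (b + 1))" unfolding x_def powr_def using m0 by (simp add: mult.commute)
    finally show ?thesis .
  qed
  have Na1: "real N * a \<le> 1"
  proof -
    have g: "1 \<le> m powr (b + 1)" using m32 b0 by (intro ge_one_powr_ge_zero) auto
    have "m powr (- (b + 1)) = 1 / m powr (b + 1)" by (simp only: powr_minus_divide)
    hence "m powr (- (b + 1)) \<le> 1" using g by (simp add: divide_le_eq_1)
    thus ?thesis using Na by simp
  qed
  have "(1 + a) ^ N \<le> exp a ^ N" using a0 by (intro power_mono) (auto simp: exp_ge_add_one_self)
  also have "\<dots> = exp (real N * a)" by (simp add: exp_of_nat_mult)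
  also have "\<dots> \<le> exp 1" using Na1 by simp
  also have "\<dots> \<le> 3" using exp_le by simp
  finally have pa3: "(1 + a) ^ N \<le> 3" .
  have "real N * a * (1 + a) ^ N \<le> m powr (- (b + 1)) * 3"
    using Na pa3 a0 by (intro mult_mono) auto
  also have "m powr (- (b + 1)) = m powr (- b) / m"
  proof -
    have "- (b + 1) = - b + - 1" by simp
    hence "m powr (- (b + 1)) = m powr (- b) * m powr (- 1)" by (simp only: powr_add)
    also have "m powr (- 1) = 1 / m" using m0 by (simp add: powr_minus_divide)
    finally show ?thesis by simp
  qed
  finally have bnd0: "real N * a * (1 + a) ^ N \<le> m powr (- b) / m * 3" .
  have bnd: "real (card (H - G)) / real (card H) \<le> m powr (- b) / m * 3" by (rule order_trans[OF main bnd0])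
  have "m powr (- b) / m * 3 \<le> 2 * m powr (- b)"
  proof -
    have "3 / m \<le> 2" using m32 by (simp add: divide_le_eq)
    hence "m powr (- b) * (3 / m) \<le> m powr (- b) * 2" by (intro mult_left_mono) auto
    thus ?thesis by (simp add: field_simps)
  qed
  hence bad: "real (card (H - G)) / real (card H) \<le> 2 * m powr (- b)" using bnd by linarith
  have cHG: "real (card (H \<inter> G)) = real (card H) - real (card (H - G))"
  proof -
    have "card ((H - G) \<union> (H \<inter> G)) = card (H - G) + card (H \<inter> G)"
      using fH by (intro card_Un_disjoint) auto
    hence "card H = card (H - G) + card (H \<inter> G)" by (simp only: Un_Diff_Int)
    thus ?thesis by simp
  qed
  have "measure_pmf.prob (random_hashes M c S L k) G = real (card (H \<inter> G)) / real (card H)"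
    unfolding rh using Hne fH by (simp add: measure_pmf_of_set)
  also have "\<dots> = 1 - real (card (H - G)) / real (card H)"
    unfolding cHG using Hne fH by (simp add: diff_divide_distrib card_gt_0_iff)
  finally show ?thesis using bad unfolding G_def m_def by linarith
qed

end
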